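(* There is an absolute constant $C>0$ such that the following holds. Let $(a_n)_{n\ge1}$ be real with $|a_n|\le1$ and $\gamma_n=\operatorname{sign}(a_n)$. Let $\ell\in\{0,1,2,3\}$, $k\ge1$, $q=q^{(\ell)}_k$, let $M$ be an integer with $1\le M\le L^{(\ell)}_k$, and let $r,c$ be integers in $[0,q]$. Let $x\in P^{(\ell)}\times\{-1,0,1\}^{\mathbb Z}$ satisfy, for every integer $n$ with $q\le n<q^{(\ell)}_{k+1}$, $$\Pi_1x(n)=(\sigma^{-r}s^{(\ell)}_k)(n),\qquad \Pi_2x(n)=\gamma(qn+c).$$ Then $$\Big|\frac1{qM}\sum_{n=1}^{qM}g(T^nx)a(n)-A^{q,M}_{r,c}\Big|\le C\frac{q}{M}.$$
   Context: Let $\tau:\mathbb N\to(0,\infty)$ be non-increasing with $\tau(n)\to0$. Fix integers $2\le q_1<q_2<\cdots$ such that for every $k\ge1$: (i) $q_{k+1}>q_k^4+3q_k$; (ii) $\tau(\lceil q_{k+1}/3\rceil)<\frac1{16q_k}$. For $k\ge1$ put $q^{(0)}_k=q_{2k}$, $q^{(1)}_k=q_{2k+1}$, $q^{(2)}_k=q^{(0)}_k-1$, $q^{(3)}_k=q^{(1)}_k-1$, and $L^{(i)}_k=\lfloor q^{(i)}_{k+1}/(3q^{(i)}_k)\rfloor$. Let $s^{(i)}_k\in\{-1,0,1\}^{\mathbb N}$ (indices $n\ge1$) be given by $s^{(i)}_k(n)=1$ if $n=jq^{(i)}_k$ with $1\le j\le L^{(i)}_k$, $s^{(i)}_k(n)=-1$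 if $n=jq^{(i)}_k$ with $L^{(i)}_k<j\le2L^{(i)}_k$, and $s^{(i)}_k(n)=0$ otherwise. For $w\in\{-1,0,1\}^{\mathbb N}$ and $p\in\mathbb N_0$ let $\sigma^{-p}w$ be defined by $(\sigma^{-p}w)(n)=0$ for $1\le n\le p$ and $(\sigma^{-p}w)(n)=w(n-p)$ for $n>p$. For $l\le m$ write $w|_l^m=(w_l,\dots,w_m)$. Let $R^{(i)}_k=\{(\sigma^{-p}s^{(i)}_k)|_{q^{(i)}_k}^{q^{(i)}_{k+1}-1}:p=0,1,\dots,q^{(i)}_k\}$ and $P^{(i)}=\{y\in\{-1,0,1\}^{\mathbb N}: y(n)=0\text{ for }1\le n<q^{(i)}_1,\ y|_{q^{(i)}_k}^{q^{(i)}_{k+1}-1}\in R^{(i)}_k\text{ for all }k\ge1\}$. Let $Z=\{-1,0,1\}^{\mathbb N}\times\{-1,0,1\}^{\mathbb Z}$, with coordinate projections $\Pi_1,\Pi_2$; $\sigma$ is the left shift $(\sigma u)_m=u_{m+1}$ (invertible on $\{-1,0,1\}^{\mathbb Z}$); $T:Z\to Z$, $T(y,z)=(\sigma y,\sigma^{y_1}z)$; $g:Z\to\{-1,0,1\}$, $g(y,z)=z_0$. For integers $q,M\ge1$ and $r,c\in[0,q]$ set $$A^{q,M}_{r,c}=\frac1{qM}\sum_{b=r}^{q-1+r}\sum_{n=1}^M\gamma(qn+c)\,a(qn+b).$$ *)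

theory Defs
  imports Complex_Main
begin

text \<open>The base sequence q_1 < q_2 < ... is a function q :: nat => nat (index 0 unused).
  Sequences in {-1,0,1}^N are functions nat => int (index 0 unused),
  sequences in {-1,0,1}^Z are functions int => int.\<close>

definition qq :: "(nat \<Rightarrow> nat) \<Rightarrow> nat \<Rightarrow> nat \<Rightarrow> nat" where
  "qq q i k = (if i = 0 then q (2*k) else if i = 1 then q (2*k+1)
               else if i = 2 then q (2*k) - 1 else q (2*k+1) - 1)"

definition LL :: "(nat \<Rightarrow> nat) \<Rightarrow> nat \<Rightarrow> nat \<Rightarrow> nat" where
  "LL q i k = nat \<lfloor>real (qq q i (k+1)) / (3 * real (qq q i k))\<rfloor>"

definition sseq :: "(nat \<Rightarrow> nat) \<Rightarrow> nat \<Rightarrow> nat \<Rightarrow> nat \<Rightarrow> int" where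
  "sseq q i k n =
     (if \<exists>j. 1 \<le> j \<and> j \<le> LL q i k \<and> n = j * qq q i k then 1
      else if \<exists>j. LL q i k < j \<and> j \<le> 2 * LL q i k \<and> n = j * qq q i k then -1
      else 0)"

definition shiftR :: "nat \<Rightarrow> (nat \<Rightarrow> int) \<Rightarrow> nat \<Rightarrow> int" where
  "shiftR p w n = (if n \<le> p then 0 else w (n - p))"

definition restr :: "(nat \<Rightarrow> int) \<Rightarrow> nat \<Rightarrow> nat \<Rightarrow> int list" where
  "restr w l m = map w [l..<Suc m]"

definition RR :: "(nat \<Rightarrow> nat) \<Rightarrow> nat \<Rightarrow> nat \<Rightarrow> int list set" where
  "RR q i k = {restr (shiftR p (sseq q i k)) (qq q i k) (qq q i (k+1) - 1) | p. p \<le> qq q i k}"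

definition PP :: "(nat \<Rightarrow> nat) \<Rightarrow> nat \<Rightarrow> (nat \<Rightarrow> int) set" where
  "PP q i = {y. (\<forall>n\<ge>1. y n \<in> {-1,0,1}) \<and>
                (\<forall>n. 1 \<le> n \<and> n < qq q i 1 \<longrightarrow> y n = 0) \<and>
                (\<forall>k\<ge>1. restr y (qq q i k) (qq q i (k+1) - 1) \<in> RR q i k)}"

definition TT :: "(nat \<Rightarrow> int) \<times> (int \<Rightarrow> int) \<Rightarrow> (nat \<Rightarrow> int) \<times> (int \<Rightarrow> int)" where
  "TT x = (\<lambda>m. fst x (m+1), \<lambda>m. snd x (m + fst x 1))"

definition gg :: "(nat \<Rightarrow> int) \<times> (int \<Rightarrow> int) \<Rightarrow> int" where
  "gg x = snd x 0"

definition Aavg :: "(nat \<Rightarrow> real) \<Rightarrow> (nat \<Rightarrow> real) \<Rightarrow> nat \<Rightarrow> nat \<Rightarrow> nat \<Rightarrow> nat \<Rightarrow> real" where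
  "Aavg \<gamma> a q M r c =
     (1 / (real q * real M)) * (\<Sum>b=r..q-1+r. \<Sum>n=1..M. \<gamma> (q*n+c) * a (q*n+b))"

end

theory Submission
  imports Defs
begin

lemma q_ge2:
  assumes "2 \<le> q (1::nat)" "\<forall>j\<ge>1. q j < q (j+1)"
  shows "j \<ge> 1 \<Longrightarrow> 2 \<le> (q j::nat)"
proof (induction j rule: dec_induct[of 1])
  case base then show ?case using assms by simp
next
  case (step n) then show ?case using assms(2)[rule_format, of n] by simp
qed

lemma q_grow:
  assumes "\<forall>j\<ge>1. q (j+1) > q j ^ 4 + 3 * (q j::nat)" "j \<ge> 1"
  shows "q (j+1) \<ge> 3 * q j + 1"
  using assms(1)[rule_format, OF assms(2)] by simp

lemma qq_facts:
  assumes "2 \<le> q (1::nat)" "\<forall>j\<ge>1. q j < q (j+1)"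
    "\<forall>j\<ge>1. q (j+1) > q j ^ 4 + 3 * (q j::nat)" "l \<le> 3" "k \<ge> 1"
  shows "1 \<le> qq q l k \<and> 3 * qq q l k + 3 \<le> qq q l (k+1)"
proof -
  have g: "\<And>j. j\<ge>1 \<Longrightarrow> q (j+1) \<ge> 3 * q j + 1" using q_grow assms(3) by blast
  have m: "\<And>j. j\<ge>1 \<Longrightarrow> q (j+1) \<ge> q j + 1" using assms(2) by fastforce
  have t: "\<And>j. j\<ge>1 \<Longrightarrow> 2 \<le> q j" using q_ge2 assms(1,2) by blast
  have a1: "q (2*k+2) \<ge> 3 * q (2*k) + 4"
    using g[of "2*k+1"] m[of "2*k"] assms(5) by simp
  have a2: "q (2*k+3) \<ge> 3 * q (2*k+1) + 4"
    using g[of "2*k+2"] m[of "2*k+1"] assms(5) by (simp add: numeral_eq_Suc)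
  have b1: "2 \<le> q (2*k)" "2 \<le> q (2*k+1)" using t assms(5) by auto
  show ?thesis using a1 a2 b1 assms(4)
    by (auto simp: qq_def numeral_eq_Suc mult_2 add_ac)
qed

lemma LL_bound:
  assumes "qq q l k > 0"
  shows "3 * qq q l k * LL q l k \<le> qq q l (k+1)"
proof -
  let ?Q = "qq q l k" and ?Q' = "qq q l (k+1)"
  have "real (LL q l k) \<le> real ?Q' / (3 * real ?Q)"
    unfolding LL_def by (simp add: of_nat_floor)
  hence "3 * real ?Q * real (LL q l k) \<le> real ?Q'" using assms
    by (simp add: field_simps)
  thus ?thesis by (metis of_nat_le_iff of_nat_mult of_nat_numeral)
qed

lemma shs:
  assumes "qq q i k > 0"
  shows "shiftR p (sseq q i k) n =
    of_bool (n \<in> (\<lambda>j. j * qq q i k + p) ` {1..LL q i k})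
    - of_bool (n \<in> (\<lambda>j. j * qq q i k + p) ` {LL q i k<..2 * LL q i k})"
proof (cases "n \<le> p")
  case True
  then show ?thesis using assms by (auto simp: shiftR_def)
next
  case False
  then obtain m where n: "n = m + p" "m > 0" by (metis add.commute less_imp_add_positive not_le)
  show ?thesis using assms n by (auto simp: shiftR_def sseq_def)
qed

lemma block_zero:
  assumes "qq q i k > 0" "p \<le> qq q i k" "3 * qq q i k + 3 \<le> qq q i (k+1)"
  shows "(\<Sum>n\<in>{qq q i k..<qq q i (k+1)}. shiftR p (sseq q i k) n) = 0"
proof -
  let ?Q = "qq q i k" and ?Q' = "qq q i (k+1)" and ?L = "LL q i k"
  let ?f = "\<lambda>j. j * ?Q + p"
  have LB: "3 * ?Q * ?L \<le> ?Q'" using LL_bound assms(1) .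
  have inj: "inj_on ?f X" for X using assms(1) by (auto simp: inj_on_def)
  have sub: "?f ` {1..2 * ?L} \<subseteq> {?Q..<?Q'}"
  proof
    fix n assume "n \<in> ?f ` {1..2 * ?L}"
    then obtain j where j: "1 \<le> j" "j \<le> 2 * ?L" "n = j * ?Q + p" by auto
    have h1: "?Q \<le> j * ?Q" using j(1) by simp
    have "j * ?Q \<le> 2 * ?L * ?Q" using j(2) by (rule mult_le_mono1)
    hence h2: "j * ?Q \<le> 2 * (?Q * ?L)" by (simp add: ac_simps)
    have h3: "3 * (?Q * ?L) \<le> ?Q'" using LB by (simp add: ac_simps)
    have "?Q \<le> n" "n < ?Q'" using h1 h2 h3 j(3) assms(2,3) by linarith+
    thus "n \<in> {?Q..<?Q'}" by simp
  qed
  have s1: "?f ` {1..?L} \<subseteq> {?Q..<?Q'}"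
    by (rule subset_trans[OF image_mono sub]) auto
  have s2: "?f ` {?L<..2*?L} \<subseteq> {?Q..<?Q'}"
    by (rule subset_trans[OF image_mono sub]) auto
  have "(\<Sum>n\<in>{?Q..<?Q'}. shiftR p (sseq q i k) n) =
     (\<Sum>n\<in>{?Q..<?Q'}. of_bool (n \<in> ?f ` {1..?L})) - (\<Sum>n\<in>{?Q..<?Q'}. of_bool (n \<in> ?f ` {?L<..2*?L}))"
    by (simp only: shs[OF assms(1)] sum_subtractf)
  also have "\<dots> = int (card (?f ` {1..?L})) - int (card (?f ` {?L<..2*?L}))"
    using s1 s2 by (simp add: Int_absorb1 Int_def[symmetric])
  also have "\<dots> = 0" using inj by (simp add: card_image)
  finally show ?thesis .
qed
definition Ssum :: "(nat \<Rightarrow> int) \<Rightarrow> nat \<Rightarrow> int" where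
  "Ssum y n = (\<Sum>i\<in>{1..<Suc n}. y i)"

lemma prefix_zero:
  assumes "2 \<le> q (1::nat)" "\<forall>j\<ge>1. q j < q (j+1)"
    "\<forall>j\<ge>1. q (j+1) > q j ^ 4 + 3 * (q j::nat)" "l \<le> 3" "y \<in> PP q l"
  shows "k \<ge> 1 \<Longrightarrow> Ssum y (qq q l k - 1) = 0"
proof (induction k rule: dec_induct[of 1])
  case base
  have Q1: "qq q l 1 \<ge> 1" using qq_facts[OF assms(1-4)] by simp
  have "\<forall>i. 1 \<le> i \<and> i < qq q l 1 \<longrightarrow> y i = 0" using assms(5) by (simp add: PP_def)
  then show ?case using Q1 unfolding Ssum_def by (intro sum.neutral) auto
next
  case (step k)
  have F: "1 \<le> qq q l k \<and> 3 * qq q l k + 3 \<le> qq q l (k+1)" using qq_facts[OF assms(1-4) step(1)] .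
  have "restr y (qq q l k) (qq q l (k+1) - 1) \<in> RR q l k" using assms(5) step(1) by (simp add: PP_def)
  then obtain p where p: "p \<le> qq q l k"
    "restr y (qq q l k) (qq q l (k+1) - 1) = restr (shiftR p (sseq q l k)) (qq q l k) (qq q l (k+1) - 1)"
    by (auto simp: RR_def)
  have Suc': "Suc (qq q l (k+1) - 1) = qq q l (k+1)" using F by simp
  have eq: "\<forall>i\<in>{qq q l k..<qq q l (k+1)}. y i = shiftR p (sseq q l k) i"
    using p(2) unfolding restr_def Suc' map_eq_conv by simp
  have "Ssum y (qq q l (Suc k) - 1) = Ssum y (qq q l k - 1) + (\<Sum>i\<in>{qq q l k..<qq q l (k+1)}. y i)"
    unfolding Ssum_def using F Suc'
    by (simp add: sum.atLeastLessThan_concat)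
  also have "(\<Sum>i\<in>{qq q l k..<qq q l (k+1)}. y i) = (\<Sum>i\<in>{qq q l k..<qq q l (k+1)}. shiftR p (sseq q l k) i)"
    using eq by (intro sum.cong) auto
  also have "\<dots> = 0" using block_zero[of q l k p] F p(1) by simp
  finally show ?case using step(3) by simp
qed
lemma Ssum_Suc: "Ssum y (Suc n) = Ssum y n + y (Suc n)"
  by (simp add: Ssum_def)

lemma TT_iter: "(TT ^^ n) x = (\<lambda>m. fst x (m+n), \<lambda>m. snd x (m + Ssum (fst x) n))"
proof (induction n)
  case 0 then show ?case by (simp add: Ssum_def)
next
  case (Suc n)
  show ?case unfolding funpow.simps comp_def Suc.IH by (simp add: TT_def Ssum_Suc add_ac)
qed

lemma reidx:
  fixes g :: "nat \<Rightarrow> real"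
  assumes "Q > 0"
  shows "(\<Sum>b\<in>{r..Q-1+r}. \<Sum>j\<in>{1..M}. g (Q*j+b)) = (\<Sum>n\<in>{Q+r..Q*M+Q-1+r}. g n)"
proof -
  have "(\<Sum>b\<in>{r..Q-1+r}. \<Sum>j\<in>{1..M}. g (Q*j+b)) = (\<Sum>j\<in>{1..M}. \<Sum>b\<in>{r..Q-1+r}. g (Q*j+b))"
    by (rule sum.swap)
  also have "\<dots> = (\<Sum>n\<in>{Q+r..Q*M+Q-1+r}. g n)"
  proof (induction M)
    case 0 then show ?case using assms by simp
  next
    case (Suc M)
    have "(\<Sum>j\<in>{1..Suc M}. \<Sum>b\<in>{r..Q-1+r}. g (Q*j+b)) =
       (\<Sum>j\<in>{1..M}. \<Sum>b\<in>{r..Q-1+r}. g (Q*j+b)) + (\<Sum>b\<in>{r..Q-1+r}. g (Q*Suc M+b))"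
      by simp
    also have "(\<Sum>b\<in>{r..Q-1+r}. g (Q*Suc M+b)) = (\<Sum>n\<in>{r+Q*Suc M..Q-1+r+Q*Suc M}. g n)"
      using sum.shift_bounds_cl_nat_ivl[of g r "Q*Suc M" "Q-1+r"] by (simp add: add_ac)
    also have "(\<Sum>n\<in>{Q+r..Q*Suc M+Q-1+r}. g n) =
        (\<Sum>n\<in>{Q+r..Q*M+Q-1+r}. g n) + (\<Sum>n\<in>{Q*M+Q-1+r+1..Q*M+Q-1+r+Q}. g n)"
    proof -
      have "Q*Suc M+Q-1+r = (Q*M+Q-1+r) + Q" using assms by simp
      thus ?thesis by (simp only: ) (rule sum.ub_add_nat, simp)
    qed
    moreover have "(\<Sum>n\<in>{r+Q*Suc M..Q-1+r+Q*Suc M}. g n) = (\<Sum>n\<in>{Q*M+Q-1+r+1..Q*M+Q-1+r+Q}. g n)"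
    proof -
      have "{r+Q*Suc M..Q-1+r+Q*Suc M} = {Q*M+Q-1+r+1..Q*M+Q-1+r+Q}" using assms by auto
      thus ?thesis by (rule arg_cong)
    qed
    ultimately show ?case using Suc by simp
  qed
  finally show ?thesis .
qed
lemma main_est:
  fixes q :: "nat \<Rightarrow> nat" and a :: "nat \<Rightarrow> real" and x :: "(nat \<Rightarrow> int) \<times> (int \<Rightarrow> int)"
  assumes q1: "2 \<le> q 1" and qinc: "\<forall>j\<ge>1. q j < q (j+1)"
    and qgr: "\<forall>j\<ge>1. q (j+1) > q j ^ 4 + 3 * q j"
    and abnd: "\<forall>n\<ge>1. \<bar>a n\<bar> \<le> 1"
    and l3: "l \<le> 3" and k1: "1 \<le> k" and Mpos: "1 \<le> M" and hML: "M \<le> LL q l k"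
    and rQ: "r \<le> qq q l k" and cQ: "c \<le> qq q l k"
    and xP: "fst x \<in> PP q l" and zb: "\<forall>m. snd x m \<in> {-1,0,1}"
    and blk: "\<forall>n. qq q l k \<le> n \<and> n < qq q l (k+1) \<longrightarrow>
        fst x n = shiftR r (sseq q l k) n \<and>
        real_of_int (snd x (int n)) = sgn (a (qq q l k * n + c))"
  shows "\<bar>(1 / (real (qq q l k) * real M)) *
        (\<Sum>n=1..qq q l k * M. real_of_int (gg ((TT ^^ n) x)) * a n)
      - Aavg (\<lambda>m. sgn (a m)) a (qq q l k) M r c\<bar>
    \<le> 10 * real (qq q l k) / real M"
proof -
  define Q where "Q = qq q l k"
  define Q' where "Q' = qq q l (k+1)"
  define L where "L = LL q l k"
  define y where "y = fst x"
  define z where "z = snd x"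
  define N where "N = Q * M"
  have F: "1 \<le> Q" "3 * Q + 3 \<le> Q'" using qq_facts[OF q1 qinc qgr l3 k1] by (auto simp: Q_def Q'_def)
  have LB: "3 * Q * L \<le> Q'" using LL_bound[of q l k] F(1) by (simp add: Q_def Q'_def L_def)
  have "Q * M \<le> Q * L" using hML by (simp add: L_def)
  hence NQ': "N < Q'" using LB F unfolding N_def by linarith
  have MN: "M \<le> N" using F(1) by (simp add: N_def)
  have S0: "Ssum y (Q - 1) = 0" using prefix_zero[OF q1 qinc qgr l3 xP k1] by (simp add: y_def Q_def)
  have Ych: "y i = of_bool (\<exists>j\<ge>1. i = j * Q + r)" if "Q \<le> i" "i \<le> N" for i
  proof -
    have yy: "y i = shiftR r (sseq q l k) i" using blk that NQ' by (simp add: y_def Q_def Q'_def)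
    have yy2: "shiftR r (sseq q l k) i = of_bool (i \<in> (\<lambda>j. j * Q + r) ` {1..L}) - of_bool (i \<in> (\<lambda>j. j * Q + r) ` {L<..2 * L})"
      using shs[of q l k r i] F(1) by (simp add: Q_def L_def)
    have n2: "i \<notin> (\<lambda>j. j * Q + r) ` {L<..2 * L}"
    proof
      assume "i \<in> (\<lambda>j. j * Q + r) ` {L<..2 * L}"
      then obtain j where j: "L < j" "i = j * Q + r" by auto
      have "Suc M * Q \<le> j * Q" using j(1) hML by (intro mult_le_mono1) (simp add: L_def)
      thus False using j(2) that(2) F(1) by (simp add: N_def algebra_simps)
    qed
    have e1: "(i \<in> (\<lambda>j. j * Q + r) ` {1..L}) = (\<exists>j\<ge>1. i = j * Q + r)"
    proof
      assume "\<exists>j\<ge>1. i = j * Q + r"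
      then obtain j where j: "1 \<le> j" "i = j * Q + r" by auto
      have "j \<le> M"
      proof (rule ccontr)
        assume "\<not> j \<le> M"
        hence "Suc M * Q \<le> j * Q" by (intro mult_le_mono1) simp
        thus False using j(2) that(2) F(1) by (simp add: N_def algebra_simps)
      qed
      thus "i \<in> (\<lambda>j. j * Q + r) ` {1..L}" using j hML by (auto simp: L_def)
    qed auto
    show ?thesis using yy yy2 n2 e1 by simp
  qed
  have Sform: "Q - 1 \<le> n \<Longrightarrow> n \<le> N \<Longrightarrow> Ssum y n = int ((n - r) div Q)" for n
  proof (induction n rule: dec_induct)
    case base then show ?case using S0 rQ F(1) by (simp add: Q_def)
  next
    case (step n)
    have yS: "y (Suc n) = of_bool (\<exists>j\<ge>1. Suc n = j * Q + r)" using Ych step by simp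
    show ?case
    proof (cases "Suc n \<le> r")
      case True
      hence "Suc n = r" "r = Q" using step(1) rQ F(1) by (auto simp: Q_def)
      then show ?thesis using step yS by (auto simp: Ssum_Suc)
    next
      case False
      hence e: "Suc n - r = Suc (n - r)" by simp
      have "(\<exists>j\<ge>1. Suc n = j * Q + r) = (Suc (n - r) mod Q = 0)"
      proof
        assume "\<exists>j\<ge>1. Suc n = j * Q + r"
        then obtain j where "Suc n = j * Q + r" by auto
        hence "Suc (n - r) = j * Q" using False by linarith
        thus "Suc (n - r) mod Q = 0" by simp
      next
        assume "Suc (n - r) mod Q = 0"
        then obtain j where j: "Suc (n - r) = Q * j" by auto
        hence "j \<ge> 1" by (cases j) auto
        thus "\<exists>j\<ge>1. Suc n = j * Q + r" using j False by (intro exI[of _ j]) (auto simp: algebra_simps)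
      qed
      then show ?thesis using step yS e by (auto simp: Ssum_Suc div_Suc)
    qed
  qed
  define G where "G n = sgn (a (Q * ((n - r) div Q) + c)) * a n" for n
  define f1 where "f1 n = (if n \<in> {1..N} then real_of_int (z (Ssum y n)) * a n else 0)" for n
  define f2 where "f2 n = (if n \<in> {Q+r..N+Q-1+r} then G n else 0)" for n
  define U where "U = {1..N+2*Q}"
  define B where "B = {1..Q*Q+2*Q} \<union> {N+1..N+2*Q}"
  define Sum1 where "Sum1 = (\<Sum>n=1..N. real_of_int (gg ((TT ^^ n) x)) * a n)"
  define Sum2 where "Sum2 = (\<Sum>b=r..Q-1+r. \<Sum>j=1..M. sgn (a (Q*j+c)) * a (Q*j+b))"
  have zb1: "\<bar>real_of_int (z m)\<bar> \<le> 1" for m using zb[rule_format, of m] by (auto simp: z_def)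
  have ab1: "n \<ge> 1 \<Longrightarrow> \<bar>a n\<bar> \<le> 1" for n using abnd by simp
  have sg1: "\<bar>sgn (t::real)\<bar> \<le> 1" for t by (simp add: abs_sgn_eq)
  have Sum1U: "Sum1 = sum f1 U"
  proof -
    have "Sum1 = (\<Sum>n=1..N. real_of_int (z (Ssum y n)) * a n)"
      unfolding Sum1_def by (simp add: gg_def TT_iter y_def z_def)
    also have "\<dots> = sum f1 U"
    proof -
      have "sum f1 U = (\<Sum>n\<in>U \<inter> {1..N}. real_of_int (z (Ssum y n)) * a n)"
        unfolding f1_def by (rule sum.inter_restrict[symmetric]) (simp add: U_def)
      moreover have "U \<inter> {1..N} = {1..N}" by (auto simp: U_def)
      ultimately show ?thesis by simp
    qed
    finally show ?thesis .
  qed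
  have Sum2U: "Sum2 = sum f2 U"
  proof -
    have "Sum2 = (\<Sum>b=r..Q-1+r. \<Sum>j=1..M. G (Q*j+b))"
      unfolding Sum2_def
    proof (intro sum.cong refl)
      fix b j assume b: "b \<in> {r..Q-1+r}"
      have "(Q*j+b - r) div Q = j"
      proof -
        have "Q*j+b-r = (b-r) + Q*j" using b by simp
        moreover have "b - r < Q" using b F(1) by auto
        ultimately show ?thesis using F(1) by simp
      qed
      thus "sgn (a (Q*j+c)) * a (Q*j+b) = G (Q*j+b)" by (simp add: G_def)
    qed
    also have "\<dots> = (\<Sum>n\<in>{Q+r..Q*M+Q-1+r}. G n)" using reidx[where Q=Q and r=r and M=M and g=G] F(1) by simp
    also have "\<dots> = sum f2 U"
    proof -
      have "sum f2 U = (\<Sum>n\<in>U \<inter> {Q+r..N+Q-1+r}. G n)"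
        unfolding f2_def by (rule sum.inter_restrict[symmetric]) (simp add: U_def)
      moreover have "U \<inter> {Q+r..N+Q-1+r} = {Q+r..Q*M+Q-1+r}" using rQ F(1) by (auto simp: U_def N_def Q_def)
      ultimately show ?thesis by simp
    qed
    finally show ?thesis .
  qed
  have pt: "\<bar>f1 n - f2 n\<bar> \<le> 2 * of_bool (n \<in> B)" if nU: "n \<in> U" for n
  proof (cases "n \<in> B")
    case True
    have n1: "n \<ge> 1" using nU by (simp add: U_def)
    have "\<bar>f1 n\<bar> \<le> 1"
      unfolding f1_def using zb1 ab1[OF n1] by (auto simp: abs_mult intro: mult_le_one)
    moreover have "\<bar>f2 n\<bar> \<le> 1"
      unfolding f2_def G_def using sg1 ab1[OF n1] by (auto simp: abs_mult intro: mult_le_one)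
    ultimately show ?thesis using True by simp
  next
    case False
    have n1: "Q*Q+2*Q < n" "n \<le> N" using False nU by (auto simp: B_def U_def)
    have "Q + r \<le> Q*Q+2*Q" using rQ by (simp add: Q_def)
    hence inr: "n \<in> {1..N}" "n \<in> {Q+r..N+Q-1+r}" using n1 F(1) by auto
    define j where "j = (n - r) div Q"
    have Sj: "Ssum y n = int j" unfolding j_def using Sform[of n] n1 F(1) by simp
    have "Q * Q \<le> n - r" using n1 rQ by (simp add: Q_def)
    hence jQ: "Q \<le> j" unfolding j_def using F(1)
      by (metis div_le_mono nonzero_mult_div_cancel_left not_one_le_zero)
    have "j \<le> N div Q" unfolding j_def by (rule div_le_mono) (use n1 in simp)
    hence "j \<le> M" using F(1) by (simp add: N_def)
    hence jQ': "j < Q'" using MN NQ' by linarith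
    have "real_of_int (z (int j)) = sgn (a (Q * j + c))"
      using blk[rule_format, of j] jQ jQ' by (simp add: z_def Q_def Q'_def)
    hence "f1 n = f2 n" using inr Sj by (simp add: f1_def f2_def G_def j_def)
    thus ?thesis by simp
  qed
  have finU: "finite U" by (simp add: U_def)
  have "\<bar>Sum1 - Sum2\<bar> = \<bar>\<Sum>n\<in>U. f1 n - f2 n\<bar>" by (simp add: Sum1U Sum2U sum_subtractf)
  also have "\<dots> \<le> (\<Sum>n\<in>U. \<bar>f1 n - f2 n\<bar>)" by (rule sum_abs)
  also have "\<dots> \<le> (\<Sum>n\<in>U. 2 * of_bool (n \<in> B))" by (rule sum_mono) (rule pt)
  also have "\<dots> = 2 * real (card (U \<inter> {n. n \<in> B}))" using finU by (simp add: sum_distrib_left[symmetric])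
  also have "\<dots> \<le> 2 * real (card B)"
  proof -
    have "card (U \<inter> {n. n \<in> B}) \<le> card B" by (rule card_mono) (auto simp: B_def)
    thus ?thesis by simp
  qed
  also have "\<dots> \<le> 2 * real (Q*Q + 4*Q)"
  proof -
    have "card B \<le> card {1..Q*Q+2*Q} + card {N+1..N+2*Q}" unfolding B_def by (rule card_Un_le)
    hence "card B \<le> Q*Q + 4*Q" by simp
    hence "real (card B) \<le> real (Q*Q + 4*Q)" by (rule of_nat_mono)
    thus ?thesis by (rule mult_left_mono) simp
  qed
  also have "\<dots> \<le> 10 * real (Q*Q)"
  proof -
    have "4*Q \<le> 4*(Q*Q)" using F(1) by simp
    moreover have "4*u \<le> 4*t \<Longrightarrow> 2*(t+4*u) \<le> 10*t" for t u :: nat by simp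
    ultimately have "2*(Q*Q + 4*Q) \<le> 10*(Q*Q)" by blast
    hence "real (2*(Q*Q + 4*Q)) \<le> real (10*(Q*Q))" by (rule of_nat_mono)
    thus ?thesis by (simp only: of_nat_mult of_nat_numeral)
  qed
  finally have D: "\<bar>Sum1 - Sum2\<bar> \<le> 10 * real (Q*Q)" .
  have QMpos: "real Q * real M > 0" using F(1) Mpos by simp
  have "\<bar>(1 / (real Q * real M)) * Sum1 - Aavg (\<lambda>m. sgn (a m)) a Q M r c\<bar>
      = \<bar>Sum1 - Sum2\<bar> / (real Q * real M)"
    unfolding Aavg_def Sum2_def[symmetric] using QMpos
    by (simp add: right_diff_distrib[symmetric] abs_mult abs_divide divide_simps)
  also have "\<dots> \<le> 10 * real (Q*Q) / (real Q * real M)"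
    using D QMpos by (intro divide_right_mono) auto
  also have "\<dots> = 10 * real Q / real M" using F(1) by (simp add: field_simps)
  finally show ?thesis unfolding Sum1_def N_def Q_def .
qed

theorem mainTheorem7:
  shows "\<exists>C>0. \<forall>(\<tau>::nat \<Rightarrow> real) (q::nat \<Rightarrow> nat) (a::nat \<Rightarrow> real) (l::nat) (k::nat) (M::nat)
      (r::nat) (c::nat) (x::(nat \<Rightarrow> int) \<times> (int \<Rightarrow> int)).
    (\<forall>n. \<tau> n > 0) \<and> antimono \<tau> \<and> \<tau> \<longlonglongrightarrow> 0 \<and>
    2 \<le> q 1 \<and> (\<forall>j\<ge>1. q j < q (j+1)) \<and>
    (\<forall>j\<ge>1. q (j+1) > q j ^ 4 + 3 * q j) \<and>
    (\<forall>j\<ge>1. \<tau> (nat \<lceil>real (q (j+1)) / 3\<rceil>) < 1 / (16 * real (q j))) \<and>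
    (\<forall>n\<ge>1. \<bar>a n\<bar> \<le> 1) \<and>
    l \<le> 3 \<and> 1 \<le> k \<and> 1 \<le> M \<and> M \<le> LL q l k \<and>
    r \<le> qq q l k \<and> c \<le> qq q l k \<and>
    fst x \<in> PP q l \<and> (\<forall>m. snd x m \<in> {-1,0,1}) \<and>
    (\<forall>n. qq q l k \<le> n \<and> n < qq q l (k+1) \<longrightarrow>
        fst x n = shiftR r (sseq q l k) n \<and>
        real_of_int (snd x (int n)) = sgn (a (qq q l k * n + c)))
    \<longrightarrow>
    \<bar>(1 / (real (qq q l k) * real M)) *
        (\<Sum>n=1..qq q l k * M. real_of_int (gg ((TT ^^ n) x)) * a n)
      - Aavg (\<lambda>m. sgn (a m)) a (qq q l k) M r c\<bar>
    \<le> C * real (qq q l k) / real M"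
  apply (rule exI[of _ "10::real"])
  apply (intro conjI allI impI)
   apply simp
  apply (elim conjE)
  apply (rule main_est)
                apply assumption+
  done

end
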